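(* Let $\mathcal P^*$ be any partition of $\mathcal M$ minimizing $\Delta$, and let $\lambda^*=\lambda^{(\mathcal P^* )}$. Then for any CR $\mathbf J$ obtained from an interactive communication $\mathbf F$, $$\lim_{n\to\infty}\frac1n\sum_{B\in\mathcal B}\lambda^*_B\,H(\mathbf J|X^n_{B^c},\mathbf F)=0.$$
   Context: Let $\mathcal M=\{1,\dots,m\}$, $m\ge2$, and let $X_{\mathcal M}=(X_1,\dots,X_m)$ be jointly distributed random variables on finite alphabets. $X^n_{\mathcal M}$ consists of $n$ i.i.d. copies of $X_{\mathcal M}$, and $X^n_A=(X^n_i:i\in A)$. An interactive communication $\mathbf F$ (depending on $n$) is a finite sequence of transmissions; each is sent by some terminal $i$ and is a deterministic function of $X^n_i$ and the previous transmissions. A common randomness (CR) obtained from $\mathbf F$ is a sequence $\mathbf J=\mathbf J^{(n)}$ of functions of $X^n_{\mathcal M}$ such that for every $0<\epsilon<1$ and all large $n$ there exist $J_i=J_i(X^n_i,\mathbf F)$, $i\in\mathcal M$, with $\Pr[J_1=\cdots=J_m=\mathbf J]\ge1-\epsilon$. For a partition $\mathcal P$ with $|\mathcal P|\ge2$, $\Delta(\mathcal P)=\frac{1}{|\mathcal P|-1}[\sum_{A\in\mathcal P}H(X_A)-H(X_{\mathcal M})]$. $\mathcal B$ is the set of nonempty proper subsets of $\mathcal M$, and $\lambda^{(\mathcal P)}_B=\mathbf 1\{B^c\in\mathcal P\}/(|\mathcal P|-1)$. *)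

theory Defs
  imports "HOL-Probability.Probability" "HOL-Library.Disjoint_Sets"
begin

definition ent :: "'b pmf \<Rightarrow> real" where
  "ent q = - (\<Sum>y\<in>set_pmf q. pmf q y * log 2 (pmf q y))"

definition H :: "'w pmf \<Rightarrow> ('w \<Rightarrow> 'b) \<Rightarrow> real" where
  "H Q f = ent (map_pmf f Q)"

definition Hc :: "'w pmf \<Rightarrow> ('w \<Rightarrow> 'b) \<Rightarrow> ('w \<Rightarrow> 'c) \<Rightarrow> real" where
  "Hc Q f g = H Q (\<lambda>w. (f w, g w)) - H Q g"

text \<open>Single-letter source: X_M is a random function on terminals; X_A its restriction to A.\<close>
definition XA :: "nat set \<Rightarrow> (nat \<Rightarrow> 'a) \<Rightarrow> (nat \<Rightarrow> 'a)" where
  "XA A x = (\<lambda>i. if i \<in> A then x i else undefined)"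

text \<open>n i.i.d. copies: a sample is w :: nat => (nat => 'a), w t i = i-th component of t-th copy.\<close>
definition iid :: "nat \<Rightarrow> (nat \<Rightarrow> 'a) pmf \<Rightarrow> (nat \<Rightarrow> nat \<Rightarrow> 'a) pmf" where
  "iid n p = Pi_pmf {..<n} undefined (\<lambda>_. p)"

definition XnA :: "nat \<Rightarrow> nat set \<Rightarrow> (nat \<Rightarrow> nat \<Rightarrow> 'a) \<Rightarrow> (nat \<Rightarrow> nat \<Rightarrow> 'a)" where
  "XnA n A w = (\<lambda>t i. if t < n \<and> i \<in> A then w t i else undefined)"

definition Xni :: "nat \<Rightarrow> nat \<Rightarrow> (nat \<Rightarrow> nat \<Rightarrow> 'a) \<Rightarrow> (nat \<Rightarrow> 'a)" where
  "Xni n i w = (\<lambda>t. if t < n then w t i else undefined)"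

text \<open>An interactive communication protocol: a finite list of transmissions, each given by
  the sending terminal and a deterministic function of that terminal's observation X^n_i and
  the previous transmissions. The transcript F is the list of all transmissions.\<close>
type_synonym ('a, 'c) protocol = "(nat \<times> ((nat \<Rightarrow> 'a) \<Rightarrow> 'c list \<Rightarrow> 'c)) list"

fun run :: "nat \<Rightarrow> ('a, 'c) protocol \<Rightarrow> (nat \<Rightarrow> nat \<Rightarrow> 'a) \<Rightarrow> 'c list \<Rightarrow> 'c list" where
  "run n [] w prev = prev"
| "run n ((i, f) # rest) w prev = run n rest w (prev @ [f (Xni n i w) prev])"

definition transcript :: "nat \<Rightarrow> ('a, 'c) protocol \<Rightarrow> (nat \<Rightarrow> nat \<Rightarrow> 'a) \<Rightarrow> 'c list" where
  "transcript n \<pi> w = run n \<pi> w []"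

definition valid_protocol :: "nat \<Rightarrow> ('a, 'c) protocol \<Rightarrow> bool" where
  "valid_protocol m \<pi> \<longleftrightarrow> (\<forall>(i, f) \<in> set \<pi>. i \<in> {1..m})"

definition is_CR :: "nat \<Rightarrow> (nat \<Rightarrow> 'a) pmf \<Rightarrow> (nat \<Rightarrow> ('a, 'c) protocol)
     \<Rightarrow> (nat \<Rightarrow> (nat \<Rightarrow> nat \<Rightarrow> 'a) \<Rightarrow> 'j) \<Rightarrow> bool" where
  "is_CR m p F J \<longleftrightarrow>
     (\<forall>\<epsilon>::real. 0 < \<epsilon> \<and> \<epsilon> < 1 \<longrightarrow>
       (\<exists>N. \<forall>n\<ge>N. \<exists>Ji :: nat \<Rightarrow> (nat \<Rightarrow> 'a) \<Rightarrow> 'c list \<Rightarrow> 'j.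
          measure_pmf.prob (iid n p)
            {w. \<forall>i\<in>{1..m}. Ji i (Xni n i w) (transcript n (F n) w) = J n w} \<ge> 1 - \<epsilon>))"

definition Delta :: "nat \<Rightarrow> (nat \<Rightarrow> 'a) pmf \<Rightarrow> nat set set \<Rightarrow> real" where
  "Delta m p P = ((\<Sum>A\<in>P. H p (XA A)) - H p (XA {1..m})) / (real (card P) - 1)"

definition lam :: "nat \<Rightarrow> nat set set \<Rightarrow> nat set \<Rightarrow> real" where
  "lam m P B = (if {1..m} - B \<in> P then 1 else 0) / (real (card P) - 1)"

end

theory Submission imports Defs begin

lemma pmf_map_finite:
  assumes fin: "finite (set_pmf Q)"
  shows "pmf (map_pmf h Q) z = (\<Sum>w\<in>{w\<in>set_pmf Q. h w = z}. pmf Q w)"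
proof -
  have "pmf (map_pmf h Q) z = measure Q (h -` {z} \<inter> set_pmf Q)"
    by (simp add: pmf_map measure_Int_set_pmf)
  also have "h -` {z} \<inter> set_pmf Q = {w\<in>set_pmf Q. h w = z}" by auto
  also have "measure Q {w\<in>set_pmf Q. h w = z} = (\<Sum>w\<in>{w\<in>set_pmf Q. h w = z}. pmf Q w)"
    by (rule measure_measure_pmf_finite) (use fin in auto)
  finally show ?thesis .
qed

lemma group_sum:
  fixes G :: "'b \<Rightarrow> real"
  assumes fin: "finite (set_pmf Q)"
  shows "(\<Sum>w\<in>set_pmf Q. pmf Q w * G (h w)) = (\<Sum>z\<in>h ` set_pmf Q. pmf (map_pmf h Q) z * G z)"
proof -
  have "(\<Sum>w\<in>set_pmf Q. pmf Q w * G (h w)) =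
     (\<Sum>z\<in>h ` set_pmf Q. \<Sum>w\<in>{w\<in>set_pmf Q. h w = z}. pmf Q w * G (h w))"
    by (rule sum.image_gen[OF fin])
  also have "\<dots> = (\<Sum>z\<in>h ` set_pmf Q. pmf (map_pmf h Q) z * G z)"
  proof (rule sum.cong[OF refl])
    fix z assume "z \<in> h ` set_pmf Q"
    have "(\<Sum>w\<in>{w\<in>set_pmf Q. h w = z}. pmf Q w * G (h w)) = (\<Sum>w\<in>{w\<in>set_pmf Q. h w = z}. pmf Q w * G z)"
      by (rule sum.cong) auto
    also have "\<dots> = pmf (map_pmf h Q) z * G z"
      by (simp add: pmf_map_finite[OF fin] sum_distrib_right)
    finally show "(\<Sum>w\<in>{w\<in>set_pmf Q. h w = z}. pmf Q w * G (h w)) = pmf (map_pmf h Q) z * G z" .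
  qed
  finally show ?thesis .
qed

lemma ent_map_sum:
  assumes fin: "finite (set_pmf Q)"
  shows "ent (map_pmf h Q) = - (\<Sum>w\<in>set_pmf Q. pmf Q w * log 2 (pmf (map_pmf h Q) (h w)))"
  unfolding ent_def using group_sum[OF fin, of "\<lambda>z. log 2 (pmf (map_pmf h Q) z)" h]
  by simp

lemma Hc_sum:
  assumes fin: "finite (set_pmf Q)"
  shows "Hc Q f g = (\<Sum>w\<in>set_pmf Q. pmf Q w *
     log 2 (pmf (map_pmf g Q) (g w) / pmf (map_pmf (\<lambda>w. (f w, g w)) Q) (f w, g w)))"
proof -
  have pos: "pmf (map_pmf k Q) (k w) > 0" if "w \<in> set_pmf Q" for w and k :: "'a \<Rightarrow> 'e"
    using that by (simp add: pmf_positive)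
  have eq: "log 2 (pmf (map_pmf g Q) (g w)) - log 2 (pmf (map_pmf (\<lambda>w. (f w, g w)) Q) (f w, g w))
     = log 2 (pmf (map_pmf g Q) (g w) / pmf (map_pmf (\<lambda>w. (f w, g w)) Q) (f w, g w))"
    if "w \<in> set_pmf Q" for w
    using pos[OF that, of g] pos[OF that, of "\<lambda>w. (f w, g w)"] by (simp add: log_divide)
  show ?thesis
    unfolding Hc_def H_def ent_map_sum[OF fin]
    by (auto simp: sum_subtractf[symmetric] right_diff_distrib[symmetric] eq intro!: sum.cong)
qed

lemma marg_le:
  "pmf (map_pmf (\<lambda>w. (f w, g w)) Q) (f w, g w) \<le> pmf (map_pmf g Q) (g w)"
  unfolding pmf_map by (rule measure_pmf.finite_measure_mono) auto

lemma Hc_nonneg: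
  assumes fin: "finite (set_pmf Q)"
  shows "Hc Q f g \<ge> 0"
  unfolding Hc_sum[OF fin]
proof (rule sum_nonneg)
  fix w assume w: "w \<in> set_pmf Q"
  have p: "pmf (map_pmf (\<lambda>w. (f w, g w)) Q) (f w, g w) > 0" using w by (simp add: pmf_positive)
  have "1 \<le> pmf (map_pmf g Q) (g w) / pmf (map_pmf (\<lambda>w. (f w, g w)) Q) (f w, g w)"
    using p marg_le[of f g Q w] by simp
  then show "0 \<le> pmf Q w * log 2 (pmf (map_pmf g Q) (g w) / pmf (map_pmf (\<lambda>w. (f w, g w)) Q) (f w, g w))"
    by simp
qed

lemma log2_le: "0 < (x::real) \<Longrightarrow> log 2 x \<le> (x - 1) / ln 2"
  unfolding log_def using ln_le_minus_one[of x] by (simp add: divide_right_mono)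

lemma fano_bound:
  assumes fin: "finite (set_pmf Q)"
  shows "Hc Q f g \<le> 1 + measure_pmf.prob Q {w. f w \<noteq> \<phi> (g w)} * log 2 (real (card (f ` set_pmf Q)))"
proof -
  define S where "S = set_pmf Q"
  define h where "h = (\<lambda>w. (f w, g w))"
  define Pfg where "Pfg = pmf (map_pmf h Q)"
  define Pg where "Pg = pmf (map_pmf g Q)"
  define K where "K = real (card (f ` S))"
  have finS: "finite S" using fin S_def by simp
  have Sne: "S \<noteq> {}" unfolding S_def by (rule set_pmf_not_empty)
  have K1: "K \<ge> 1" unfolding K_def using finS Sne
    by (metis One_nat_def Suc_leI card_gt_0_iff finite_imageI image_is_empty of_nat_1 of_nat_mono)
  define R where "R = (\<lambda>z::('b \<times> 'c). if fst z = \<phi> (snd z) then 1/2 else 1/(2*K))"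
  have Rpos: "R z > 0" for z unfolding R_def using K1 by auto
  have Pgpos: "Pg (g w) > 0" if "w \<in> S" for w
    using that unfolding Pg_def S_def by (simp add: pmf_positive)
  have Pfgpos: "Pfg z > 0" if "z \<in> h ` S" for z
    using that unfolding Pfg_def S_def by (auto simp: pmf_positive)
  have Pfgpos': "Pfg (h w) > 0" if "w \<in> S" for w using Pfgpos that by auto
  have "Hc Q f g = (\<Sum>w\<in>S. pmf Q w * log 2 (Pg (g w) / Pfg (h w)))"
    unfolding Hc_sum[OF fin] S_def Pg_def Pfg_def h_def by simp
  also have "\<dots> = (\<Sum>w\<in>S. pmf Q w * log 2 (1 / R (h w))) +
       (\<Sum>w\<in>S. pmf Q w * log 2 (R (h w) * Pg (g w) / Pfg (h w)))"
    unfolding sum.distrib[symmetric]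
  proof (rule sum.cong[OF refl])
    fix w assume w: "w \<in> S"
    have "log 2 (Pg (g w) / Pfg (h w)) = log 2 ((1 / R (h w)) * (R (h w) * Pg (g w) / Pfg (h w)))"
      using Rpos[of "h w"] by simp
    also have "\<dots> = log 2 (1 / R (h w)) + log 2 (R (h w) * Pg (g w) / Pfg (h w))"
      by (rule log_mult_pos) (use Rpos[of "h w"] Pgpos[OF w] Pfgpos'[OF w] in auto)
    finally show "pmf Q w * log 2 (Pg (g w) / Pfg (h w)) =
        pmf Q w * log 2 (1 / R (h w)) + pmf Q w * log 2 (R (h w) * Pg (g w) / Pfg (h w))"
      by (simp add: distrib_left)
  qed
  also have "\<dots> \<le> (1 + measure_pmf.prob Q {w. f w \<noteq> \<phi> (g w)} * log 2 K) + 0"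
  proof (rule add_mono)
    define E where "E = {w. f w \<noteq> \<phi> (g w)}"
    have l: "log 2 (1 / R (h w)) = 1 + (if w \<in> E then log 2 K else 0)" for w
    proof (cases "w \<in> E")
      case True
      then have "log 2 (1 / R (h w)) = log 2 (2 * K)" unfolding R_def h_def E_def by simp
      also have "\<dots> = 1 + log 2 K" using K1 by (simp add: log_mult_pos)
      finally show ?thesis using True by simp
    next
      case False
      then show ?thesis unfolding R_def h_def E_def by simp
    qed
    have "(\<Sum>w\<in>S. pmf Q w * log 2 (1 / R (h w))) =
        (\<Sum>w\<in>S. pmf Q w) + log 2 K * (\<Sum>w\<in>S. if w \<in> E then pmf Q w else 0)"
      unfolding l sum_distrib_left sum.distrib[symmetric] by (rule sum.cong) (auto simp: algebra_simps)
    also have "(\<Sum>w\<in>S. pmf Q w) = 1" using sum_pmf_eq_1[OF finS] S_def by simp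
    also have "(\<Sum>w\<in>S. if w \<in> E then pmf Q w else 0) = sum (pmf Q) (S \<inter> E)"
      using finS by (simp add: sum.inter_restrict)
    also have "\<dots> = measure_pmf.prob Q E"
      using measure_measure_pmf_finite[of "S \<inter> E" Q] measure_Int_set_pmf[of Q E] finS
      unfolding S_def by (simp add: Int_commute)
    finally show "(\<Sum>w\<in>S. pmf Q w * log 2 (1 / R (h w))) \<le> 1 + measure_pmf.prob Q {w. f w \<noteq> \<phi> (g w)} * log 2 K"
      unfolding E_def by simp
  next
    have xpos: "R (h w) * Pg (g w) / Pfg (h w) > 0" if "w \<in> S" for w
      using Rpos[of "h w"] Pgpos[OF that] Pfgpos'[OF that] by simp
    have "(\<Sum>w\<in>S. pmf Q w * log 2 (R (h w) * Pg (g w) / Pfg (h w))) \<le>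
        (\<Sum>w\<in>S. pmf Q w * ((R (h w) * Pg (g w) / Pfg (h w) - 1) / ln 2))"
      by (rule sum_mono, rule mult_left_mono) (use log2_le xpos in auto)
    also have "\<dots> = ((\<Sum>w\<in>S. pmf Q w * (R (h w) * Pg (snd (h w)) / Pfg (h w))) - (\<Sum>w\<in>S. pmf Q w)) / ln 2"
      unfolding sum_subtractf[symmetric] sum_divide_distrib by (rule sum.cong) (auto simp: h_def field_simps)
    also have "(\<Sum>w\<in>S. pmf Q w) = 1" using sum_pmf_eq_1[OF finS] S_def by simp
    also have "(\<Sum>w\<in>S. pmf Q w * (R (h w) * Pg (snd (h w)) / Pfg (h w))) =
        (\<Sum>z\<in>h ` S. Pfg z * (R z * Pg (snd z) / Pfg z))"
      using group_sum[OF fin, of "\<lambda>z. R z * Pg (snd z) / Pfg z" h] unfolding S_def Pfg_def by simp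
    also have "\<dots> = (\<Sum>z\<in>h ` S. R z * Pg (snd z))"
      proof (rule sum.cong[OF refl])
      fix z assume "z \<in> h ` S"
      then show "Pfg z * (R z * Pg (snd z) / Pfg z) = R z * Pg (snd z)" using Pfgpos[of z] by simp
    qed
    also have "\<dots> \<le> (\<Sum>z\<in>f ` S \<times> g ` S. R z * Pg (snd z))"
      using finS by (intro sum_mono2) (auto simp: h_def Pg_def less_imp_le[OF Rpos])
    also have "\<dots> = (\<Sum>x\<in>f ` S. \<Sum>y\<in>g ` S. R (x, y) * Pg y)"
      by (simp add: sum.cartesian_product split_beta)
    also have "\<dots> = (\<Sum>y\<in>g ` S. (\<Sum>x\<in>f ` S. R (x, y)) * Pg y)"
      by (subst sum.swap) (simp add: sum_distrib_right)
    also have "\<dots> \<le> (\<Sum>y\<in>g ` S. 1 * Pg y)"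
    proof (rule sum_mono, rule mult_right_mono)
      fix y
      have "(\<Sum>x\<in>f ` S. R (x, y)) \<le> (\<Sum>x\<in>f ` S. (if x = \<phi> y then 1/2 else 0) + 1/(2*K))"
        by (rule sum_mono) (use K1 in \<open>auto simp: R_def\<close>)
      also have "\<dots> = (if \<phi> y \<in> f ` S then 1/2 else 0) + K / (2*K)"
        using finS by (simp add: sum.distrib K_def)
      also have "\<dots> \<le> 1" using K1 by auto
      finally show "(\<Sum>x\<in>f ` S. R (x, y)) \<le> 1" .
      show "0 \<le> Pg y" unfolding Pg_def by simp
    qed
    also have "\<dots> = 1"
      using sum_pmf_eq_1[of "g ` S" "map_pmf g Q"] finS unfolding Pg_def S_def by simp
    finally have "(\<Sum>w\<in>S. pmf Q w * log 2 (R (h w) * Pg (g w) / Pfg (h w))) \<le> (1 - 1) / ln 2"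
      by (simp add: divide_right_mono)
    then show "(\<Sum>w\<in>S. pmf Q w * log 2 (R (h w) * Pg (g w) / Pfg (h w))) \<le> 0" by simp
  qed
  finally show ?thesis unfolding K_def S_def by simp
qed

lemma lim_lemma:
  fixes a :: "nat \<Rightarrow> real" and C :: real
  assumes nn: "\<And>n. a n \<ge> 0" and C: "C \<ge> 0"
    and bd: "\<And>\<epsilon>. 0 < \<epsilon> \<Longrightarrow> \<epsilon> < 1 \<Longrightarrow> \<exists>N. \<forall>n\<ge>N. a n \<le> 1 + \<epsilon> * real n * C"
  shows "(\<lambda>n. 1 / real n * a n) \<longlonglongrightarrow> 0"
proof (rule LIMSEQ_I)
  fix r :: real assume r: "0 < r"
  define \<epsilon> where "\<epsilon> = min (1/2) (r / (2*(C+1)))"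
  have e0: "0 < \<epsilon>" using r C by (simp add: \<epsilon>_def)
  have e1: "\<epsilon> < 1" by (simp add: \<epsilon>_def)
  obtain N where N: "\<forall>n\<ge>N. a n \<le> 1 + \<epsilon> * real n * C" using bd[OF e0 e1] by blast
  have eC: "\<epsilon> * C \<le> r / 2"
  proof -
    have "\<epsilon> * C \<le> r / (2*(C+1)) * C" using C by (intro mult_right_mono) (auto simp: \<epsilon>_def)
    also have "\<dots> = r/2 * (C/(C+1))" using C by (simp add: field_simps)
    also have "\<dots> \<le> r/2 * 1" using C r by (intro mult_left_mono) auto
    finally show ?thesis by simp
  qed
  show "\<exists>no. \<forall>n\<ge>no. norm (1 / real n * a n - 0) < r"
  proof (intro exI allI impI)
    fix n assume n: "n \<ge> max N (nat \<lceil>2/r\<rceil> + 1)"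
    then have nN: "n \<ge> N" by simp
    have "real n \<ge> real (nat \<lceil>2/r\<rceil> + 1)" using n by linarith
    then have nr: "real n > 2 / r" by linarith
    then have npos: "real n > 0" using r by (smt (verit) divide_pos_pos)
    have inv: "1 / real n < r / 2" using nr npos r by (simp add: field_simps)
    have "1 / real n * a n \<le> 1 / real n * (1 + \<epsilon> * real n * C)"
      using N nN npos by (intro mult_left_mono) auto
    also have "\<dots> = 1 / real n + \<epsilon> * C" using npos by (simp add: field_simps)
    also have "\<dots> < r" using inv eC by linarith
    finally show "norm (1 / real n * a n - 0) < r" using nn[of n] npos by simp
  qed
qed

theorem lemma2:
  fixes m :: nat
    and p :: "(nat \<Rightarrow> 'a::finite) pmf"
    and Pstar :: "nat set set"
    and F :: "nat \<Rightarrow> ('a, 'c) protocol"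
    and J :: "nat \<Rightarrow> (nat \<Rightarrow> nat \<Rightarrow> 'a) \<Rightarrow> 'j"
  assumes m2: "m \<ge> 2"
    and supp: "\<forall>x\<in>set_pmf p. \<forall>i. i \<notin> {1..m} \<longrightarrow> x i = undefined"
    and Ppart: "partition_on {1..m} Pstar" and Pcard: "card Pstar \<ge> 2"
    and Pmin: "\<forall>Q. partition_on {1..m} Q \<and> card Q \<ge> 2 \<longrightarrow> Delta m p Pstar \<le> Delta m p Q"
    and Fvalid: "\<forall>n. valid_protocol m (F n)"
    and CR: "is_CR m p F J"
  shows "(\<lambda>n. (1 / real n) *
            (\<Sum>B\<in>{B. B \<subseteq> {1..m} \<and> B \<noteq> {} \<and> B \<noteq> {1..m}}.
               lam m Pstar B *
               Hc (iid n p) (J n) (\<lambda>w. (XnA n ({1..m} - B) w, transcript n (F n) w))))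
         \<longlonglongrightarrow> 0"
proof -
  define Bs where "Bs = {B. B \<subseteq> {1..m} \<and> B \<noteq> {} \<and> B \<noteq> {1..m}}"
  define x where "x B n = 1 / real n * Hc (iid n p) (J n) (\<lambda>w. (XnA n ({1..m} - B) w, transcript n (F n) w))" for B n
  have finBs: "finite Bs" unfolding Bs_def by (rule finite_subset[of _ "Pow {1..m}"]) auto
  have "set_pmf p \<subseteq> PiE {1..m} (\<lambda>_. UNIV :: 'a set)"
    using supp by (auto simp: PiE_def extensional_def)
  then have fin_p: "finite (set_pmf p)" by (rule finite_subset) (intro finite_PiE; simp)
  have set_iid: "set_pmf (iid n p) = PiE_dflt {..<n} undefined (\<lambda>_. set_pmf p)" for n
    unfolding iid_def by (simp add: set_Pi_pmf o_def)
  have fin_iid: "finite (set_pmf (iid n p))" for n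
    unfolding set_iid using fin_p by (intro finite_PiE_dflt) auto
  have card_iid: "card (set_pmf (iid n p)) = card (set_pmf p) ^ n" for n
    unfolding set_iid using fin_p by (simp add: card_PiE_dflt)
  define c where "c = real (card (set_pmf p))"
  have c1: "c \<ge> 1" unfolding c_def using fin_p set_pmf_not_empty[of p]
    by (metis One_nat_def Suc_leI card_gt_0_iff of_nat_1 of_nat_mono)
  have each: "x B \<longlonglongrightarrow> 0" if B: "B \<in> Bs" for B
  proof -
    obtain i where i: "i \<in> {1..m}" "i \<notin> B" using B unfolding Bs_def by blast
    define A where "A = {1..m} - B"
    have iA: "i \<in> A" using i A_def by simp
    show ?thesis unfolding x_def A_def[symmetric]
    proof (rule lim_lemma[where C = "log 2 c"])
      show "0 \<le> Hc (iid n p) (J n) (\<lambda>w. (XnA n A w, transcript n (F n) w))" for n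
        by (rule Hc_nonneg[OF fin_iid])
      show "0 \<le> log 2 c" using c1 by simp
      fix \<epsilon> :: real assume e: "0 < \<epsilon>" "\<epsilon> < 1"
      obtain N where N: "\<forall>n\<ge>N. \<exists>Ji :: nat \<Rightarrow> (nat \<Rightarrow> 'a) \<Rightarrow> 'c list \<Rightarrow> 'j.
          measure_pmf.prob (iid n p)
            {w. \<forall>i\<in>{1..m}. Ji i (Xni n i w) (transcript n (F n) w) = J n w} \<ge> 1 - \<epsilon>"
        using CR e unfolding is_CR_def by blast
      show "\<exists>N. \<forall>n\<ge>N. Hc (iid n p) (J n) (\<lambda>w. (XnA n A w, transcript n (F n) w)) \<le> 1 + \<epsilon> * real n * log 2 c"
      proof (intro exI allI impI)
        fix n assume n: "N \<le> n"
        obtain Ji :: "nat \<Rightarrow> (nat \<Rightarrow> 'a) \<Rightarrow> 'c list \<Rightarrow> 'j" where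
          Ji: "measure_pmf.prob (iid n p)
            {w. \<forall>i\<in>{1..m}. Ji i (Xni n i w) (transcript n (F n) w) = J n w} \<ge> 1 - \<epsilon>"
          using N n by blast
        define good where "good = {w. \<forall>i\<in>{1..m}. Ji i (Xni n i w) (transcript n (F n) w) = J n w}"
        define \<phi> where "\<phi> = (\<lambda>(a :: nat \<Rightarrow> nat \<Rightarrow> 'a, tr). Ji i (\<lambda>t. if t < n then a t i else undefined) tr)"
        have phi: "\<phi> (XnA n A w, transcript n (F n) w) = Ji i (Xni n i w) (transcript n (F n) w)" for w
        proof -
          have "(\<lambda>t. if t < n then XnA n A w t i else undefined) = Xni n i w"
            unfolding XnA_def Xni_def using iA by (simp add: fun_eq_iff)
          then show ?thesis unfolding \<phi>_def by simp
        qed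
        have sub: "{w. J n w \<noteq> \<phi> (XnA n A w, transcript n (F n) w)} \<subseteq> UNIV - good"
          unfolding good_def phi using i by auto
        have Pe: "measure_pmf.prob (iid n p) {w. J n w \<noteq> \<phi> (XnA n A w, transcript n (F n) w)} \<le> \<epsilon>"
        proof -
          have "measure_pmf.prob (iid n p) {w. J n w \<noteq> \<phi> (XnA n A w, transcript n (F n) w)}
              \<le> measure_pmf.prob (iid n p) (UNIV - good)"
            by (rule measure_pmf.finite_measure_mono[OF sub]) simp
          also have "\<dots> = 1 - measure_pmf.prob (iid n p) good"
            using measure_pmf.prob_compl[of good "iid n p"] by simp
          finally show ?thesis using Ji unfolding good_def by simp
        qed
        define K where "K = real (card (J n ` set_pmf (iid n p)))"
        have K1: "K \<ge> 1" unfolding K_def using fin_iid[of n] set_pmf_not_empty[of "iid n p"]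
          by (metis One_nat_def Suc_leI card_gt_0_iff finite_imageI image_is_empty of_nat_1 of_nat_mono)
        have "K \<le> real (card (set_pmf (iid n p)))" unfolding K_def
          using card_image_le[OF fin_iid] of_nat_mono by blast
        also have "\<dots> = c ^ n" unfolding card_iid c_def by simp
        finally have "log 2 K \<le> log 2 (c ^ n)" using K1 by simp
        also have "\<dots> = real n * log 2 c" using c1 by (simp add: log_nat_power)
        finally have logK: "log 2 K \<le> real n * log 2 c" .
        have logK0: "log 2 K \<ge> 0" using K1 by simp
        have "Hc (iid n p) (J n) (\<lambda>w. (XnA n A w, transcript n (F n) w))
            \<le> 1 + measure_pmf.prob (iid n p) {w. J n w \<noteq> \<phi> (XnA n A w, transcript n (F n) w)} * log 2 K"
          unfolding K_def by (rule fano_bound[OF fin_iid])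
        also have "\<dots> \<le> 1 + \<epsilon> * (real n * log 2 c)"
          using Pe logK logK0 e by (intro add_left_mono mult_mono) auto
        finally show "Hc (iid n p) (J n) (\<lambda>w. (XnA n A w, transcript n (F n) w)) \<le> 1 + \<epsilon> * real n * log 2 c"
          by (simp add: mult.assoc)
      qed
    qed
  qed
  have "(\<lambda>n. \<Sum>B\<in>Bs. lam m Pstar B * x B n) \<longlonglongrightarrow> 0"
    by (rule tendsto_null_sum) (rule tendsto_mult_right_zero, rule each)
  moreover have "(\<lambda>n. \<Sum>B\<in>Bs. lam m Pstar B * x B n) = (\<lambda>n. (1 / real n) *
            (\<Sum>B\<in>Bs. lam m Pstar B *
               Hc (iid n p) (J n) (\<lambda>w. (XnA n ({1..m} - B) w, transcript n (F n) w))))"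
    unfolding x_def by (simp add: sum_distrib_left mult.left_commute)
  ultimately show ?thesis unfolding Bs_def by simp
qed

end
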